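(* Let $d,m\ge 1$ and let $\mathbf{G}\in\mathbb{R}^{dm\times dm}$ be a symmetric matrix satisfying: (P1) $\mathbf{G}$ is positive semidefinite; (P2) $\mathrm{rank}(\mathbf{G})\le d$; (P3) $\mathbf{G}_{ii}=\mathbf{I}$ for all $i\in\{1,\ldots,m\}$; (P4) $\mathbf{G}_{i,i+1}\in\mathbb{SO}(d)$ for all $i\in\{1,\ldots,m-1\}$. Then there exist $\mathbf{R}_1,\ldots,\mathbf{R}_m\in\mathbb{SO}(d)$ such that $\mathbf{G}_{ij}=\mathbf{R}_i^\top\mathbf{R}_j$ for all $i,j\in\{1,\ldots,m\}$.
   Context: $\mathbb{SO}(d)=\{\mathbf{R}\in\mathbb{R}^{d\times d}:\mathbf{R}^\top\mathbf{R}=\mathbf{I},\ \det\mathbf{R}=1\}$. For a matrix $\mathbf{X}\in\mathbb{R}^{dm\times dm}$, $\mathbf{X}_{ij}\in\mathbb{R}^{d\times d}$ denotes its $(i,j)$-th $d\times d$ block, i.e. $\mathbf{X}_{ij}(p,q)=\mathbf{X}((i-1)d+p,(j-1)d+q)$ for $p,q\in\{1,\ldots,d\}$. $\mathbf{I}$ is the $d\times d$ identity. *)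

theory Defs
  imports "Jordan_Normal_Form.DL_Rank" "Jordan_Normal_Form.Determinant"
begin

text \<open>Block indexing is 0-based: block i (for i < m) occupies rows/cols i*d .. i*d+d-1.\<close>

definition blk :: "nat \<Rightarrow> real mat \<Rightarrow> nat \<Rightarrow> nat \<Rightarrow> real mat" where
  "blk d X i j = mat d d (\<lambda>(p, q). X $$ (i * d + p, j * d + q))"

definition SO :: "nat \<Rightarrow> real mat set" where
  "SO d = {R. R \<in> carrier_mat d d \<and> transpose_mat R * R = 1\<^sub>m d \<and> det R = 1}"

definition psd :: "nat \<Rightarrow> real mat \<Rightarrow> bool" where
  "psd n G \<longleftrightarrow> G \<in> carrier_mat n n \<and> (\<forall>x \<in> carrier_vec n. 0 \<le> x \<bullet> (G *\<^sub>v x))"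

definition mat_rank :: "nat \<Rightarrow> real mat \<Rightarrow> nat" where
  "mat_rank n G = vec_space.rank n G"

end

theory Submission imports Defs begin

lemma (in vec_space) factor_through:
  fixes G :: "'a mat" and d j c :: nat
  assumes G: "G \<in> carrier_mat n n" and rk: "rank G \<le> d" and jd: "j*d+d \<le> n"
    and I: "\<And>p q. p < d \<Longrightarrow> q < d \<Longrightarrow> G $$ (j*d+p, j*d+q) = (if p = q then 1 else 0)"
    and c: "c < n"
  shows "\<exists>w \<in> carrier_vec d. col G c = mat n d (\<lambda>(r,q). G $$ (r, j*d+q)) *\<^sub>v w"
proof -
  define C where "C = mat n d (\<lambda>(r,q). G $$ (r, j*d+q))"
  have Cc: "C \<in> carrier_mat n d" unfolding C_def by simp
  have colC: "col C q = col G (j*d+q)" if "q < d" for q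
    using that G jd by (intro eq_vecI) (auto simp: C_def)
  have Cjj: "C $$ (j*d+p, q) = (if p = q then 1 else 0)" if "p < d" "q < d" for p q
    using that jd I by (auto simp: C_def)
  have dist: "distinct (cols C)"
  proof (subst distinct_conv_nth, intro allI impI)
    fix p q assume "p < length (cols C)" "q < length (cols C)" "p \<noteq> q"
    hence pq: "p < d" "q < d" "p \<noteq> q" using Cc by auto
    have "col C p $ (j*d+p) = 1" using pq jd Cc Cjj by simp
    moreover have "col C q $ (j*d+p) = 0" using pq jd Cc Cjj by simp
    ultimately show "cols C ! p \<noteq> cols C ! q" using pq Cc by auto
  qed
  have mulC: "(C *\<^sub>v v) $ (j*d+p) = v $ p" if "v \<in> carrier_vec d" "p < d" for v p
  proof -
    have "(C *\<^sub>v v) $ (j*d+p) = (\<Sum>q<d. C $$ (j*d+p, q) * v $ q)"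
      using that jd Cc by (simp add: scalar_prod_def lessThan_atLeast0)
    also have "\<dots> = (\<Sum>q<d. (if p = q then v $ q else 0))"
      using that Cjj by (intro sum.cong) auto
    also have "\<dots> = v $ p" using that by simp
    finally show ?thesis .
  qed
  have indpt: "lin_indpt (set (cols C))"
  proof
    assume "lin_dep (set (cols C))"
    then obtain v where v: "v \<in> carrier_vec d" "v \<noteq> 0\<^sub>v d" "C *\<^sub>v v = 0\<^sub>v n"
      using lin_depE[OF Cc _ dist] by blast
    have "v = 0\<^sub>v d"
    proof (rule eq_vecI)
      fix p assume "p < dim_vec (0\<^sub>v d)"
      hence p: "p < d" by simp
      have "v $ p = (C *\<^sub>v v) $ (j*d+p)" using mulC[OF v(1) p] by simp
      also have "\<dots> = 0" using v(3) jd p by simp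
      finally show "v $ p = 0\<^sub>v d $ p" using p by simp
    qed (use v in auto)
    with v(2) show False by simp
  qed
  have Ccar: "set (cols C) \<subseteq> carrier_vec n" using Cc cols_dim by blast
  have sub: "set (cols C) \<subseteq> set (cols G)"
  proof
    fix x assume "x \<in> set (cols C)"
    then obtain q where q: "q < d" "x = col C q" using Cc by (auto simp: in_set_conv_nth)
    hence "x = col G (j*d+q)" using colC by simp
    moreover have "j*d+q < n" using q jd by simp
    ultimately show "x \<in> set (cols G)" using G by (auto simp: in_set_conv_nth intro!: exI[of _ "j*d+q"])
  qed
  have cardC: "card (set (cols C)) = d" using dist Cc by (simp add: distinct_card)
  have gc: "col G c \<in> carrier_vec n" using G c by simp
  have inspan: "col G c \<in> span (set (cols C))"
  proof (cases "col G c \<in> set (cols C)")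
    case True thus ?thesis using in_own_span[OF Ccar] by blast
  next
    case False
    show ?thesis
    proof (rule ccontr)
      assume ns: "col G c \<notin> span (set (cols C))"
      hence li: "lin_indpt (set (cols C) \<union> {col G c})"
        using lin_dep_iff_in_span[OF Ccar indpt gc False] by simp
      have "set (cols C) \<union> {col G c} \<subseteq> set (cols G)" using sub G c by (auto simp: in_set_conv_nth)
      hence "card (set (cols C) \<union> {col G c}) \<le> rank G"
        using rank_ge_card_indpt[OF G _ li] by blast
      moreover have "card (set (cols C) \<union> {col G c}) = d + 1" using cardC False by simp
      ultimately show False using rk by simp
    qed
  qed
  obtain a where a: "a \<in> set (cols C) \<rightarrow> carrier class_ring" "lincomb a (set (cols C)) = col G c"
    using finite_in_span[OF _ Ccar inspan] by auto
  have "C *\<^sub>v vec d (\<lambda>i. a (col C i)) = col G c"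
    using mat_mult_eq_lincomb[OF Cc dist] a(2) by simp
  thus ?thesis unfolding C_def[symmetric] by (intro bexI[of _ "vec d (\<lambda>i. a (col C i))"]) auto
qed

lemma entry_factor:
  fixes G :: "real mat" and d j c n :: nat
  assumes G: "G \<in> carrier_mat n n" and rk: "vec_space.rank n G \<le> d" and jd: "j*d+d \<le> n"
    and I: "\<And>p q. p < d \<Longrightarrow> q < d \<Longrightarrow> G $$ (j*d+p, j*d+q) = (if p = q then 1 else 0)"
    and c: "c < n" and r: "r < n"
  shows "G $$ (r, c) = (\<Sum>q<d. G $$ (r, j*d+q) * G $$ (j*d+q, c))"
proof -
  obtain w where w: "w \<in> carrier_vec d" "col G c = mat n d (\<lambda>(r,q). G $$ (r, j*d+q)) *\<^sub>v w"
    using vec_space.factor_through[OF G rk jd I c] by blast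
  have e: "G $$ (x, c) = (\<Sum>q<d. G $$ (x, j*d+q) * w $ q)" if "x < n" for x
  proof -
    have "G $$ (x, c) = col G c $ x" using G c that by simp
    also have "\<dots> = (\<Sum>q<d. G $$ (x, j*d+q) * w $ q)"
      unfolding w(2) using that w(1) by (simp add: scalar_prod_def lessThan_atLeast0)
    finally show ?thesis .
  qed
  have wq: "w $ q = G $$ (j*d+q, c)" if "q < d" for q
  proof -
    have "G $$ (j*d+q, c) = (\<Sum>q'<d. G $$ (j*d+q, j*d+q') * w $ q')"
      using e[of "j*d+q"] that jd by simp
    also have "\<dots> = (\<Sum>q'<d. (if q = q' then w $ q' else 0))"
      using that I by (intro sum.cong) auto
    finally have "G $$ (j*d+q, c) = (\<Sum>q'<d. (if q = q' then w $ q' else 0))" .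
    thus ?thesis using that by simp
  qed
  show ?thesis using e[OF r] wq by simp
qed

lemma blk_factor:
  fixes G :: "real mat" and d m :: nat
  assumes G: "G \<in> carrier_mat (d*m) (d*m)" and rk: "mat_rank (d*m) G \<le> d"
    and I: "\<forall>i < m. blk d G i i = 1\<^sub>m d"
    and ijk: "i < m" "j < m" "k < m"
  shows "blk d G i k = blk d G i j * blk d G j k"
proof (rule eq_matI)
  have lt: "a*d + p < d*m" if "a < m" "p < d" for a p
  proof -
    have "a*d + p < a*d + d" using that by simp
    also have "\<dots> = (a+1)*d" by simp
    also have "\<dots> \<le> m*d" using that by (intro mult_right_mono) auto
    finally show ?thesis by (simp add: mult.commute)
  qed
  have jd: "j*d+d \<le> d*m"
  proof -
    have "j*d+d = (j+1)*d" by simp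
    also have "\<dots> \<le> m*d" using ijk by (intro mult_right_mono) auto
    finally show ?thesis by (simp add: mult.commute)
  qed
  have Ij: "G $$ (j*d+p, j*d+q) = (if p = q then 1 else 0)" if "p < d" "q < d" for p q
  proof -
    have "blk d G j j $$ (p,q) = 1\<^sub>m d $$ (p,q)" using I ijk by simp
    thus ?thesis using that by (simp add: blk_def)
  qed
  fix p q assume pq: "p < dim_row (blk d G i j * blk d G j k)" "q < dim_col (blk d G i j * blk d G j k)"
  hence pq: "p < d" "q < d" by (auto simp: blk_def)
  have "blk d G i k $$ (p, q) = G $$ (i*d+p, k*d+q)" using pq by (simp add: blk_def)
  also have "\<dots> = (\<Sum>l<d. G $$ (i*d+p, j*d+l) * G $$ (j*d+l, k*d+q))"
    using entry_factor[OF G rk[unfolded mat_rank_def] jd Ij lt[OF ijk(3) pq(2)] lt[OF ijk(1) pq(1)]] by simp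
  also have "\<dots> = (blk d G i j * blk d G j k) $$ (p, q)"
    using pq by (simp add: blk_def scalar_prod_def lessThan_atLeast0)
  finally show "blk d G i k $$ (p, q) = (blk d G i j * blk d G j k) $$ (p, q)" .
qed (auto simp: blk_def)

primrec Rseq :: "nat \<Rightarrow> real mat \<Rightarrow> nat \<Rightarrow> real mat" where
  "Rseq d G 0 = 1\<^sub>m d"
| "Rseq d G (Suc i) = Rseq d G i * blk d G i (Suc i)"

lemma SO_mult:
  assumes "A \<in> SO d" "B \<in> SO d" shows "A * B \<in> SO d"
proof -
  have A: "A \<in> carrier_mat d d" "transpose_mat A * A = 1\<^sub>m d" "det A = 1" using assms(1) by (auto simp: SO_def)
  have B: "B \<in> carrier_mat d d" "transpose_mat B * B = 1\<^sub>m d" "det B = 1" using assms(2) by (auto simp: SO_def)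
  have e1: "transpose_mat A * (A * B) = (transpose_mat A * A) * B"
    by (rule assoc_mult_mat[symmetric, of _ d d _ d _ d]) (use A B in auto)
  have "transpose_mat (A * B) * (A * B) = (transpose_mat B * transpose_mat A) * (A * B)"
    using A B by (simp add: transpose_mult)
  also have "\<dots> = transpose_mat B * (transpose_mat A * (A * B))"
    by (rule assoc_mult_mat[of _ d d _ d _ d]) (use A B in auto)
  also have "\<dots> = transpose_mat B * B" unfolding e1 using A B by simp
  also have "\<dots> = 1\<^sub>m d" using B by simp
  finally show ?thesis using A B by (simp add: SO_def det_mult[OF A(1) B(1)])
qed

lemma SO_one: "1\<^sub>m d \<in> SO d" by (simp add: SO_def)

theorem theorem1:
  fixes d m :: nat and G :: "real mat"
  assumes "d \<ge> 1" and "m \<ge> 1"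
    and "G \<in> carrier_mat (d * m) (d * m)"
    and "transpose_mat G = G"
    and "psd (d * m) G"
    and "mat_rank (d * m) G \<le> d"
    and "\<forall>i < m. blk d G i i = 1\<^sub>m d"
    and "\<forall>i. i + 1 < m \<longrightarrow> blk d G i (i + 1) \<in> SO d"
  shows "\<exists>R :: nat \<Rightarrow> real mat. (\<forall>i < m. R i \<in> SO d) \<and>
           (\<forall>i < m. \<forall>j < m. blk d G i j = transpose_mat (R i) * R j)"
proof -
  note G = assms(3) and rk = assms(6) and I = assms(7) and S = assms(8)
  define R where "R = Rseq d G"
  have RSO: "R i \<in> SO d" if "i < m" for i
    using that
  proof (induction i)
    case 0 thus ?case by (simp add: R_def SO_one)
  next
    case (Suc i) thus ?case using S by (auto simp: R_def intro!: SO_mult)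
  qed
  have b0: "blk d G 0 i = R i" if "i < m" for i
    using that
  proof (induction i)
    case 0 thus ?case using I by (simp add: R_def)
  next
    case (Suc i)
    have "blk d G 0 (Suc i) = blk d G 0 i * blk d G i (Suc i)"
      using blk_factor[OF G rk I, where i=0 and j=i and k="Suc i"] Suc.prems by simp
    moreover have "blk d G 0 i = R i" using Suc by simp
    ultimately show ?case by (simp add: R_def)
  qed
  have tr: "blk d G i 0 = transpose_mat (blk d G 0 i)" if im: "i < m" for i
  proof -
    have "G $$ (i*d+p, q) = G $$ (q, i*d+p)" if "p < d" "q < d" for p q
    proof -
      have "i*d + p < i*d + d" using that by simp
      also have "\<dots> = (i+1)*d" by simp
      also have "\<dots> \<le> m*d" using im by (intro mult_right_mono) auto
      finally have a: "i*d+p < d*m" by (simp add: mult.commute)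
      have "d \<le> d*m" using assms(2) by simp
      hence b: "q < d*m" using that by linarith
      have "transpose_mat G $$ (q, i*d+p) = G $$ (i*d+p, q)" using G a b by simp
      thus ?thesis using assms(4) by simp
    qed
    thus ?thesis by (intro eq_matI) (auto simp: blk_def)
  qed
  show ?thesis
  proof (intro exI[of _ R] conjI allI impI)
    fix i assume "i < m" thus "R i \<in> SO d" by (rule RSO)
  next
    fix i j assume ij: "i < m" "j < m"
    have "blk d G i j = blk d G i 0 * blk d G 0 j" using blk_factor[OF G rk I, where i=i and j=0 and k=j] assms(2) ij by simp
    moreover have "blk d G i 0 = transpose_mat (R i)" using tr[OF ij(1)] b0[OF ij(1)] by simp
    moreover have "blk d G 0 j = R j" using b0[OF ij(2)] .
    ultimately show "blk d G i j = transpose_mat (R i) * R j" by simp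
  qed
qed

end
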